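(* For all integers $n\geq 0$ and $p\geq 0$, \[ \sum_{j=0}^n \binom{p+j}{j}\binom{2(n-j)}{n-j}4^{j}O_{n-j} = 2^{2n-1}\binom{n+p+1}{n}\bigl(H_{n+p+1}-H_{p+1}\bigr) - \sum_{j=1}^n \binom{p+j}{j-1}4^{j-1}C_{n-j}\bigl(H_{p+j}-H_{p+1}\bigr). \] In particular, \[ \sum_{j=0}^n \binom{2j}{j}\frac{O_j}{4^j} = \frac{n+1}{2}\bigl(H_{n+1}-1\bigr) - \sum_{j=1}^n \frac{j\,C_{n-j}}{4^{n+1-j}}\bigl(H_j-1\bigr). \]
   Context: $H_n=\sum_{j=1}^n \frac1j$ is the $n$th harmonic number ($H_0=0$), $O_n=\sum_{j=1}^n\frac{1}{2j-1}$ is the $n$th odd harmonic number ($O_0=0$), and $C_n=\frac{1}{n+1}\binom{2n}{n}$ is the $n$th Catalan number. *)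

theory Defs
  imports "HOL-Analysis.Analysis"
begin

definition oddharm :: "nat \<Rightarrow> real" where
  "oddharm n = (\<Sum>j=1..n. 1 / (2 * real j - 1))"

definition catalan :: "nat \<Rightarrow> real" where
  "catalan n = real ((2*n) choose n) / (real n + 1)"

end

theory Submission
  imports Defs
begin

definition bb :: "nat \<Rightarrow> real" where "bb k = real ((2*k) choose k)"

lemma bb_Suc: "bb (Suc k) * (real k + 1) = 2 * (2 * real k + 1) * bb k"
proof -
  have "real (Suc (Suc (2*k)) choose Suc k) * real (Suc k) = real (Suc (Suc (2*k))) * real (Suc (2*k) choose k)"
    using Suc_times_binomial_eq[of "Suc (2*k)" k] by (metis of_nat_mult)
  moreover have "real (Suc (2*k)) * real ((2*k) choose k) = real (Suc (2*k) choose k) * real (Suc (2*k) - k)"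
    using binomial_absorb_comp[of "Suc (2*k)" k] by (metis diff_Suc_1 of_nat_mult mult.commute)
  moreover have "real (Suc (2*k) - k) = real k + 1" by simp
  ultimately show ?thesis unfolding bb_def
    by (simp add: field_simps)
qed

lemma bb_pos: "bb k > 0" unfolding bb_def by simp

lemma cat_bb: "catalan k = bb k / (real k + 1)" unfolding catalan_def bb_def by simp

lemma cat_key: "catalan (Suc d) - 2 * bb (Suc d) = - bb (Suc (Suc d)) / 2"
proof -
  have "bb (Suc (Suc d)) * (real d + 2) = 2 * (2 * real d + 3) * bb (Suc d)"
    using bb_Suc[of "Suc d"] by (simp add: algebra_simps)
  then show ?thesis unfolding cat_bb by (simp add: field_simps)
qed

lemma inner_sum: "(\<Sum>k=i..i+d. 4^k * catalan (i+d-k)) = 2*4^(i+d) - 4^i * bb (Suc d) / 2"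
proof (induction d arbitrary: i)
  case 0
  have "bb 1 = 2" unfolding bb_def by simp
  then show ?case by (simp add: catalan_def)
next
  case (Suc d)
  have "(\<Sum>k=i..i+Suc d. 4^k * catalan (i+Suc d-k)) = 4^i * catalan (Suc d) + (\<Sum>k=Suc i..Suc i+d. 4^k * catalan (Suc i+d-k))"
    by (subst sum.atLeast_Suc_atMost) auto
  also have "\<dots> = 4^i * catalan (Suc d) + (2*4^(Suc i+d) - 4^Suc i * bb (Suc d) / 2)"
    using Suc.IH[of "Suc i"] by simp
  also have "\<dots> = 4^i * (catalan (Suc d) - 2 * bb (Suc d)) + 2*4^(i + Suc d)" by (simp add: algebra_simps)
  also have "\<dots> = 2*4^(i+Suc d) - 4^i * bb (Suc (Suc d)) / 2" unfolding cat_key by simp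
  finally show ?case .
qed

definition vv :: "nat \<Rightarrow> real" where "vv n = (\<Sum>i=1..n. 4^i * bb (n-i) / real i)"

lemma vrec: "(real n + 1) * vv (Suc n) = (4*real n+2) * vv n + 4 * bb n"
proof -
  have "(real n + 1) * vv (Suc n) = (\<Sum>i=1..Suc n. 4^i * bb (Suc n - i) + 4^i * real (Suc n - i) * bb (Suc n - i) / real i)"
    unfolding vv_def sum_distrib_left
    by (rule sum.cong) (auto simp: field_simps of_nat_diff)
  also have "\<dots> = (\<Sum>i=1..Suc n. 4^i * bb (Suc n - i)) + (\<Sum>i=1..Suc n. 4^i * real (Suc n - i) * bb (Suc n - i) / real i)"
    by (rule sum.distrib)
  also have "(\<Sum>i=1..Suc n. 4^i * bb (Suc n - i)) = (\<Sum>i=0..n. 4^(Suc i) * bb (n - i))"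
    by (simp only: One_nat_def sum.atLeast_Suc_atMost_Suc_shift) (simp add: comp_def)
  also have "\<dots> = 4 * bb n + 4 * (\<Sum>i=1..n. 4^i * bb (n - i))"
    by (subst sum.atLeast_Suc_atMost) (auto simp: sum_distrib_left mult.assoc)
  also have "(\<Sum>i=1..Suc n. 4^i * real (Suc n - i) * bb (Suc n - i) / real i) = (\<Sum>i=1..n. 4^i * real (Suc n - i) * bb (Suc n - i) / real i)"
    by simp
  also have "\<dots> = (\<Sum>i=1..n. (4*real n+2) * (4^i * bb (n-i) / real i) - 4 * (4^i * bb (n - i)))"
  proof (rule sum.cong)
    fix i assume i: "i \<in> {1..n}"
    then have e: "Suc n - i = Suc (n - i)" by auto
    have "bb (Suc (n-i)) * (real (n-i) + 1) = 2 * (2 * real (n-i) + 1) * bb (n-i)" by (rule bb_Suc)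
    then have "real (Suc n - i) * bb (Suc n - i) = 2 * (2 * (real n - real i) + 1) * bb (n-i)"
      using i unfolding e by (simp add: of_nat_diff algebra_simps)
    then have "4^i * real (Suc n - i) * bb (Suc n - i) / real i = 4^i * (2 * (2 * (real n - real i) + 1) * bb (n-i)) / real i"
      by (simp add: mult.assoc)
    also have "\<dots> = (4*real n+2) * (4^i * bb (n-i) / real i) - 4 * (4^i * bb (n - i))"
      using i by (simp add: field_simps)
    finally show "4^i * real (Suc n - i) * bb (Suc n - i) / real i = (4*real n+2) * (4^i * bb (n-i) / real i) - 4 * (4^i * bb (n - i))" .
  qed simp
  also have "\<dots> = (4*real n+2) * vv n - 4 * (\<Sum>i=1..n. 4^i * bb (n - i))"
    unfolding vv_def by (simp add: sum_subtractf sum_distrib_left)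
  finally show ?thesis by simp
qed

lemma uv: "2 * bb n * oddharm n = vv n"
proof (induction n)
  case 0
  then show ?case by (simp add: oddharm_def vv_def)
next
  case (Suc n)
  have o: "oddharm (Suc n) = oddharm n + 1 / (2 * real n + 1)"
    unfolding oddharm_def by simp
  have bS: "bb (Suc n) = 2*(2*real n+1)*bb n/(real n+1)"
    using bb_Suc[of n] by (simp add: field_simps)
  have "(real n + 1) * vv (Suc n) = (real n + 1) * (2 * bb (Suc n) * oddharm (Suc n))"
  proof -
    have "(real n + 1) * (2 * bb (Suc n) * oddharm (Suc n)) = 4 * (2*real n+1) * bb n * (oddharm n + 1 / (2 * real n + 1))"
    proof -
      have "(real n + 1) * (2 * bb (Suc n) * oddharm (Suc n)) = 2 * ((real n + 1) * bb (Suc n)) * oddharm (Suc n)"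
        by (simp add: algebra_simps)
      also have "\<dots> = 4 * (2*real n+1) * bb n * oddharm (Suc n)" using bb_Suc[of n] by (simp add: algebra_simps)
      finally show ?thesis unfolding o .
    qed
    also have "\<dots> = 4 * (2*real n+1) * bb n * oddharm n + 4 * bb n"
      by (simp add: field_simps)
    finally show ?thesis unfolding vrec Suc.IH[symmetric] by (simp add: algebra_simps)
  qed
  then show ?case by simp
qed

lemma swap_tri: fixes m :: nat shows "(\<Sum>k=0..m. \<Sum>i=1..k. f k i) = (\<Sum>i=1..m. \<Sum>k=i..m. (f k i :: real))"
proof (induction m)
  case 0 then show ?case by simp
next
  case (Suc m)
  have "(\<Sum>i=1..Suc m. \<Sum>k=i..Suc m. f k i) = (\<Sum>i=1..m. \<Sum>k=i..Suc m. f k i) + f (Suc m) (Suc m)" by simp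
  also have "(\<Sum>i=1..m. \<Sum>k=i..Suc m. f k i) = (\<Sum>i=1..m. (\<Sum>k=i..m. f k i) + f (Suc m) i)"
    by (rule sum.cong) auto
  finally show ?case using Suc.IH by (simp add: sum.distrib)
qed

lemma W_lemma: "(\<Sum>k=0..m. 4^k * catalan (m-k) * harm k) = 2*4^m*harm m - (\<Sum>i=1..m. 4^i * bb (Suc m - i) / real i)/2"
proof -
  have "(\<Sum>k=0..m. 4^k * catalan (m-k) * harm k) = (\<Sum>k=0..m. \<Sum>i=1..k. 4^k * catalan (m-k) / real i)"
    unfolding harm_def by (simp add: sum_distrib_left divide_inverse)
  also have "\<dots> = (\<Sum>i=1..m. \<Sum>k=i..m. 4^k * catalan (m-k) / real i)" by (rule swap_tri)
  also have "\<dots> = (\<Sum>i=1..m. (2*4^m - 4^i * bb (Suc (m-i)) / 2) / real i)"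
  proof (rule sum.cong)
    fix i assume i: "i \<in> {1..m}"
    have "(\<Sum>k=i..m. 4^k * catalan (m-k) / real i) = (\<Sum>k=i..i+(m-i). 4^k * catalan (i+(m-i)-k)) / real i"
      using i by (simp add: sum_divide_distrib)
    also have "\<dots> = (2*4^m - 4^i * bb (Suc (m-i)) / 2) / real i" unfolding inner_sum using i by simp
    finally show "(\<Sum>k=i..m. 4^k * catalan (m-k) / real i) = (2*4^m - 4^i * bb (Suc (m-i)) / 2) / real i" .
  qed simp
  also have "\<dots> = (\<Sum>i=1..m. 2*4^m * inverse (real i) - (4^i * bb (Suc m - i) / real i)/2)"
    by (rule sum.cong) (auto simp: field_simps Suc_diff_le)
  also have "\<dots> = 2*4^m*harm m - (\<Sum>i=1..m. 4^i * bb (Suc m - i) / real i)/2"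
    unfolding harm_def by (simp add: sum_subtractf sum_distrib_left sum_divide_distrib)
  finally show ?thesis .
qed

lemma base_id: "bb n * oddharm n = 4^n/2 * harm n - (\<Sum>j=1..n. 4^(j-1) * catalan (n-j) * harm (j-1))"
proof (cases n)
  case 0 then show ?thesis by (simp add: oddharm_def harm_def)
next
  case (Suc m)
  have sh: "(\<Sum>j=1..Suc m. 4^(j-1) * catalan (Suc m-j) * harm (j-1)) = (\<Sum>k=0..m. 4^k * catalan (m-k) * harm k)"
    by (simp only: One_nat_def sum.atLeast_Suc_atMost_Suc_shift) (simp add: comp_def)
  have v: "vv (Suc m) = (\<Sum>i=1..m. 4^i * bb (Suc m - i) / real i) + 4^Suc m / (real m + 1)"
    unfolding vv_def by (simp add: bb_def)
  have "bb n * oddharm n = vv (Suc m) / 2" using uv[of n] Suc by simp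
  also have "\<dots> = 4^Suc m/2 * harm (Suc m) - (2*4^m*harm m - (\<Sum>i=1..m. 4^i * bb (Suc m - i) / real i)/2)"
    unfolding v harm_Suc by (simp add: field_simps)
  finally show ?thesis unfolding Suc sh W_lemma .
qed

lemma binK: "real ((a+b+2) choose (b+1)) * (real a + 1) = real ((a+b+1) choose (b+1)) * (real a + real b + 2)"
proof -
  define C1 where "C1 = (a+b+2) choose (b+1)"
  define C2 where "C2 = (a+b+1) choose (b+1)"
  have e1: "a+b+2-1 = a+b+1" and e2: "a+b+2-(b+1) = a+1" by simp_all
  have "(a+1) * C1 = (a+b+2) * C2"
    using binomial_absorb_comp[of "a+b+2" "b+1", unfolded e1 e2] unfolding C1_def C2_def .
  then have "real ((a+1) * C1) = real ((a+b+2) * C2)" by (rule arg_cong)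
  then have "(real a + 1) * real C1 = (real a + real b + 2) * real C2"
    by (simp only: of_nat_mult of_nat_add of_nat_1 of_nat_numeral)
  then show ?thesis unfolding C1_def[symmetric] C2_def[symmetric] by (simp add: algebra_simps)
qed

lemma core_alg:
  fixes X Y Z hM ha s t :: real
  assumes "Z = X + Y" "Z / s = X / t"
  shows "Z * ((hM + 1/s) - (ha + 1/t)) = X * (hM - ha) + Y * (hM - (ha + 1/t))"
proof -
  have "Z * ((hM + 1/s) - (ha + 1/t)) = Z * (hM - ha) + Z/s - Z/t" by (simp add: algebra_simps)
  also have "\<dots> = (X+Y) * (hM - ha) + X/t - (X+Y)/t" using assms by simp
  also have "\<dots> = X * (hM - ha) + Y * (hM - (ha + 1/t))" by (simp add: algebra_simps add_divide_distrib diff_divide_distrib)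
  finally show ?thesis .
qed

lemma core: "real ((a+b+2) choose (b+1)) * (harm (a+b+2) - harm (a+1))
   = real ((a+b+1) choose (b+1)) * (harm (a+b+1) - harm a) + real ((a+b+1) choose b) * (harm (a+b+1) - harm (a+1))"
proof -
  define Z where "Z = real ((a+b+2) choose (b+1))"
  define X where "X = real ((a+b+1) choose (b+1))"
  define Y where "Y = real ((a+b+1) choose b)"
  have ZXY: "Z = X + Y" unfolding X_def Y_def Z_def
    using binomial_Suc_Suc[of "a+b+1" b] by (simp add: numeral_2_eq_2 add.commute)
  have K: "Z * (real a + 1) = X * (real a + real b + 2)" unfolding X_def Z_def by (rule binK)
  have h1: "harm (a+b+2) = harm (a+b+1) + 1 / (real a + real b + 2)"
    using harm_Suc[of "a+b+1"] by (simp add: numeral_2_eq_2 divide_inverse add.commute add.left_commute)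
  have h2: "harm (a+1) = harm a + 1 / (real a + 1)"
    using harm_Suc[of a] by (simp add: divide_inverse add.commute)
  have "Z / (real a + real b + 2) = X / (real a + 1)" using K by (simp add: field_simps)
  then have "Z * (harm (a+b+2) - harm (a+1)) = X * (harm (a+b+1) - harm a) + Y * (harm (a+b+1) - harm (a+1))"
    unfolding h1 h2 by (rule core_alg[OF ZXY])
  then show ?thesis unfolding X_def Y_def Z_def .
qed

declare binomial_Suc_Suc[simp del]

definition AA :: "nat \<Rightarrow> nat \<Rightarrow> real" where
  "AA n q = (\<Sum>j=0..n. real ((q+j-1) choose j) * 4^j * (bb (n-j) * oddharm (n-j)))"
definition SS :: "nat \<Rightarrow> nat \<Rightarrow> real" where
  "SS n q = (\<Sum>i<n. real ((q+i) choose i) * 4^i * catalan (n-1-i) * (harm (q+i) - harm q))"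
definition TT :: "nat \<Rightarrow> nat \<Rightarrow> real" where
  "TT n q = 4^n/2 * real ((n+q) choose n) * (harm (n+q) - harm q)"

lemma AA_rec: "AA (Suc n) (Suc r) = AA (Suc n) r + 4 * AA n (Suc r)"
proof -
  define g where "g k = bb k * oddharm k" for k
  have "AA (Suc n) (Suc r) = g (Suc n) + (\<Sum>i=0..n. real ((r+i) choose (Suc i)) * 4^Suc i * g (n-i) + real ((r+i) choose i) * 4^Suc i * g (n-i))"
    unfolding AA_def g_def[symmetric]
    by (subst sum.atLeast0_atMost_Suc_shift) (simp add: algebra_simps binomial_Suc_Suc)
  also have "\<dots> = (g (Suc n) + (\<Sum>i=0..n. real ((r+i) choose (Suc i)) * 4^Suc i * g (n-i))) + 4 * (\<Sum>i=0..n. real ((r+i) choose i) * 4^i * g (n-i))"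
    by (simp add: sum.distrib sum_distrib_left mult_ac)
  also have "g (Suc n) + (\<Sum>i=0..n. real ((r+i) choose (Suc i)) * 4^Suc i * g (n-i)) = AA (Suc n) r"
    unfolding AA_def g_def[symmetric]
    by (subst sum.atLeast0_atMost_Suc_shift) simp
  also have "(\<Sum>i=0..n. real ((r+i) choose i) * 4^i * g (n-i)) = AA n (Suc r)"
    unfolding AA_def g_def[symmetric] by simp
  finally show ?thesis .
qed

lemma SS_rec: "SS (Suc n) (Suc r) = SS (Suc n) r + 4 * SS n (Suc r)"
proof -
  have "SS (Suc n) (Suc r) = (\<Sum>k<n. 4^Suc k * catalan (n-1-k) * (real ((r+k+2) choose (k+1)) * (harm (r+k+2) - harm (r+1))))"
    unfolding SS_def
    by (subst sum.lessThan_Suc_shift) (simp add: algebra_simps numeral_2_eq_2)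
  also have "\<dots> = (\<Sum>k<n. 4^Suc k * catalan (n-1-k) * (real ((r+k+1) choose (k+1)) * (harm (r+k+1) - harm r))
        + 4 * (4^k * catalan (n-1-k) * (real ((r+k+1) choose k) * (harm (r+k+1) - harm (r+1)))))"
    by (rule sum.cong) (simp, subst core, simp add: algebra_simps)
  also have "\<dots> = SS (Suc n) r + 4 * SS n (Suc r)"
    unfolding SS_def sum.distrib sum_distrib_left
    by (subst sum.lessThan_Suc_shift) (simp add: algebra_simps)
  finally show ?thesis .
qed

lemma TT_rec: "TT (Suc n) (Suc r) = TT (Suc n) r + 4 * TT n (Suc r)"
proof -
  have "TT (Suc n) (Suc r) = 4^Suc n/2 * (real ((r+n+2) choose (n+1)) * (harm (r+n+2) - harm (r+1)))"
    unfolding TT_def by (simp add: algebra_simps numeral_2_eq_2)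
  also have "\<dots> = 4^Suc n/2 * (real ((r+n+1) choose (n+1)) * (harm (r+n+1) - harm r) + real ((r+n+1) choose n) * (harm (r+n+1) - harm (r+1)))"
    by (simp only: core)
  also have "\<dots> = TT (Suc n) r + 4 * TT n (Suc r)"
    unfolding TT_def by (simp add: field_simps)
  finally show ?thesis .
qed


lemma main: "AA n q = TT n q - SS n q"
proof (induction q arbitrary: n)
  case 0
  have A0: "AA n 0 = bb n * oddharm n"
    unfolding AA_def by (subst sum.atLeast_Suc_atMost) (auto simp: binomial_eq_0)
  have S0: "SS n 0 = (\<Sum>j=1..n. 4^(j-1) * catalan (n-j) * harm (j-1))"
  proof (cases n)
    case 0 then show ?thesis by (simp add: SS_def)
  next
    case (Suc m)
    have "(\<Sum>j=1..Suc m. 4^(j-1) * catalan (Suc m-j) * harm (j-1)) = (\<Sum>k=0..m. 4^k * catalan (m-k) * harm k)"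
      by (simp only: One_nat_def sum.atLeast_Suc_atMost_Suc_shift) (simp add: comp_def)
    moreover have "SS (Suc m) 0 = (\<Sum>k=0..m. 4^k * catalan (m-k) * harm k)"
      unfolding SS_def by (simp add: lessThan_Suc_atMost atLeast0AtMost harm_def)
    ultimately show ?thesis using Suc by simp
  qed
  have T0: "TT n 0 = 4^n/2 * harm n" unfolding TT_def by (simp add: harm_def)
  show ?case unfolding A0 S0 T0 by (rule base_id)
next
  case (Suc r)
  note IHr = Suc.IH
  show ?case
  proof (induction n)
    case 0 then show ?case by (simp add: AA_def TT_def SS_def oddharm_def)
  next
    case (Suc m)
    then show ?case using IHr[of "Suc m"] AA_rec[of m r] TT_rec[of m r] SS_rec[of m r]
      by (simp add: algebra_simps)
  qed
qed

lemma shift1: "(\<Sum>j=1..n. f j) = (\<Sum>i<n. (f (Suc i) :: real))"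
  by (induction n) simp_all

lemma powi_eq: "(2::real) powi (2 * int n - 1) = 4^n/2"
proof -
  have e: "2 * int n = int (2*n)" by simp
  have "(2::real) powi (2 * int n - 1) = 2 powi (int (2*n)) / 2 powi 1"
    unfolding e[symmetric] by (subst power_int_diff) simp_all
  also have "\<dots> = 2^(2*n)/2" by (simp only: power_int_of_nat power_int_1_right)
  also have "\<dots> = 4^n/2" by (simp add: power_mult)
  finally show ?thesis .
qed

lemma part1:
  fixes n p :: nat
  shows "(\<Sum>j=0..n. real ((p+j) choose j) * real ((2*(n-j)) choose (n-j)) * 4^j * oddharm (n-j))
           = (2::real) powi (2 * int n - 1) * real ((n+p+1) choose n) * (harm (n+p+1) - harm (p+1))
             - (\<Sum>j=1..n. real ((p+j) choose (j-1)) * 4^(j-1) * catalan (n-j) * (harm (p+j) - harm (p+1)))"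
proof -
  have "AA n (p+1) = (\<Sum>j=0..n. real ((p+j) choose j) * real ((2*(n-j)) choose (n-j)) * 4^j * oddharm (n-j))"
    unfolding AA_def bb_def by (simp add: mult_ac)
  moreover have "TT n (p+1) = (2::real) powi (2 * int n - 1) * real ((n+p+1) choose n) * (harm (n+p+1) - harm (p+1))"
    unfolding TT_def powi_eq by (simp add: add_ac)
  moreover have "SS n (p+1) = (\<Sum>j=1..n. real ((p+j) choose (j-1)) * 4^(j-1) * catalan (n-j) * (harm (p+j) - harm (p+1)))"
    unfolding SS_def shift1 by (simp add: add_ac)
  ultimately show ?thesis using main[of n "p+1"] by simp
qed

theorem theorem6:
  fixes n p :: nat
  shows "((\<Sum>j=0..n. real ((p+j) choose j) * real ((2*(n-j)) choose (n-j)) * 4^j * oddharm (n-j))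
           = (2::real) powi (2 * int n - 1) * real ((n+p+1) choose n) * (harm (n+p+1) - harm (p+1))
             - (\<Sum>j=1..n. real ((p+j) choose (j-1)) * 4^(j-1) * catalan (n-j) * (harm (p+j) - harm (p+1)))) \<and>
         ((\<Sum>j=0..n. real ((2*j) choose j) * oddharm j / 4^j)
           = (real n + 1) / 2 * (harm (n+1) - 1)
             - (\<Sum>j=1..n. real j * catalan (n-j) / 4^(n+1-j) * (harm j - 1)))"
proof
  show "(\<Sum>j=0..n. real ((p+j) choose j) * real ((2*(n-j)) choose (n-j)) * 4^j * oddharm (n-j))
           = (2::real) powi (2 * int n - 1) * real ((n+p+1) choose n) * (harm (n+p+1) - harm (p+1))
             - (\<Sum>j=1..n. real ((p+j) choose (j-1)) * 4^(j-1) * catalan (n-j) * (harm (p+j) - harm (p+1)))"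
    by (rule part1)
next
  have F: "(\<Sum>j=0..n. 4^j * (bb (n-j) * oddharm (n-j)))
           = 4^n/2 * (real n + 1) * (harm (n+1) - 1)
             - (\<Sum>j=1..n. real j * 4^(j-1) * catalan (n-j) * (harm j - 1))"
  proof -
    have h1: "harm 1 = (1::real)" by (simp add: harm_def)
    have h1': "harm (Suc 0) = (1::real)" by (simp add: harm_def)
    have c: "(\<Sum>j=1..n. real (j choose (j-1)) * 4^(j-1) * catalan (n-j) * (harm j - harm 1))
          = (\<Sum>j=1..n. real j * 4^(j-1) * catalan (n-j) * (harm j - 1))"
    proof (rule sum.cong)
      fix j assume "j \<in> {1..n}"
      then obtain i where "j = Suc i" by (cases j) auto
      then show "real (j choose (j-1)) * 4^(j-1) * catalan (n-j) * (harm j - harm 1) = real j * 4^(j-1) * catalan (n-j) * (harm j - 1)"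
        by (simp add: h1 h1')
    qed simp
    have P: "(\<Sum>j=0..n. real (j choose j) * real ((2*(n-j)) choose (n-j)) * 4^j * oddharm (n-j))
       = (2::real) powi (2 * int n - 1) * real ((n+1) choose n) * (harm (n+1) - harm 1)
         - (\<Sum>j=1..n. real (j choose (j-1)) * 4^(j-1) * catalan (n-j) * (harm j - harm 1))"
      using part1[where n=n and p=0] by (simp only: add_0 add_0_right)
    show ?thesis using P[unfolded c, unfolded powi_eq h1] unfolding bb_def by (simp add: mult_ac)
  qed
  have L: "(\<Sum>j=0..n. real ((2*j) choose j) * oddharm j / 4^j) = (\<Sum>j=0..n. 4^j * (bb (n-j) * oddharm (n-j))) / 4^n"
  proof -
    have "(\<Sum>j=0..n. real ((2*j) choose j) * oddharm j / 4^j) = (\<Sum>j=0..n. bb (n-j) * oddharm (n-j) / 4^(n-j))"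
      unfolding bb_def by (subst sum.atLeastAtMost_rev) simp
    also have "\<dots> = (\<Sum>j=0..n. 4^j * (bb (n-j) * oddharm (n-j)) / 4^n)"
    proof (rule sum.cong)
      fix j assume "j \<in> {0..n}"
      then have "(4::real)^n = 4^j * 4^(n-j)" by (simp flip: power_add)
      then show "bb (n-j) * oddharm (n-j) / 4^(n-j) = 4^j * (bb (n-j) * oddharm (n-j)) / 4^n"
        by (simp add: field_simps)
    qed simp
    finally show ?thesis by (simp add: sum_divide_distrib)
  qed
  have R: "(\<Sum>j=1..n. real j * catalan (n-j) / 4^(n+1-j) * (harm j - 1)) = (\<Sum>j=1..n. real j * 4^(j-1) * catalan (n-j) * (harm j - 1)) / 4^n"
    unfolding sum_divide_distrib
  proof (rule sum.cong)
    fix j assume "j \<in> {1..n}"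
    then have "(4::real)^n = 4^(j-1) * 4^(n+1-j)" by (simp flip: power_add)
    then show "real j * catalan (n-j) / 4^(n+1-j) * (harm j - 1) = real j * 4^(j-1) * catalan (n-j) * (harm j - 1) / 4^n"
      by (simp add: field_simps)
  qed simp
  show "(\<Sum>j=0..n. real ((2*j) choose j) * oddharm j / 4^j)
           = (real n + 1) / 2 * (harm (n+1) - 1)
             - (\<Sum>j=1..n. real j * catalan (n-j) / 4^(n+1-j) * (harm j - 1))"
    unfolding L R F by (simp add: field_simps)
qed

end
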